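(* Let $b\ge2$ be an integer and let $w=d_1\dots d_p$ be a fixed block of $b$-ary digits with $p\ge1$. Let $u=d_1\dots d_{p-1}$ and $v=d_2\dots d_p$. Let $k\ge1$. Then for every string $s$ of length $p-1$, the following identity of formal Laurent series in $t$ holds: $$Z_w(s,k)=t^{2-p}\,Z_w(s,0,u)\,Z_w(v,k-1).$$
   Context: Strings are finite sequences over $\{0,\dots,b-1\}$, including the empty string $\epsilon$. $k_w(X)$ is the number of possibly overlapping occurrences of $w$ in the string $X$, and $X$ is $j$-admissible if $k_w(X)=j$. For strings $x,y$ and $j\ge0$, $Z_w(x,j,y)=\sum_{l\ge0}c_l t^l$, where $c_l$ is the number of $j$-admissible strings of length $l$ that have $x$ as a prefix and $y$ as a suffix. Also $Z_w(x,j)=Z_w(x,j,\epsilon)$. When $p=1$, $u=v=s=\epsilon$. *)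

theory Defs
  imports Main "HOL-Library.Sublist" "HOL-Computational_Algebra.Formal_Laurent_Series"
begin

definition bstrings :: "nat \<Rightarrow> nat list set" where
  "bstrings b = {xs. set xs \<subseteq> {..<b}}"

definition occ :: "nat list \<Rightarrow> nat list \<Rightarrow> nat" where
  "occ w X = card {i. i + length w \<le> length X \<and> take (length w) (drop i X) = w}"

definition Z3 :: "nat \<Rightarrow> nat list \<Rightarrow> nat list \<Rightarrow> nat \<Rightarrow> nat list \<Rightarrow> int fps" where
  "Z3 b w x j y = Abs_fps (\<lambda>l. int (card {X \<in> bstrings b. length X = l \<and> prefix x X
       \<and> suffix y X \<and> occ w X = j}))"

definition Z2 :: "nat \<Rightarrow> nat list \<Rightarrow> nat list \<Rightarrow> nat \<Rightarrow> int fps" where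
  "Z2 b w x j = Z3 b w x j []"

end

theory Submission
  imports Defs
begin

definition occset :: "nat list \<Rightarrow> nat list \<Rightarrow> nat set" where
  "occset w X = {i. i + length w \<le> length X \<and> take (length w) (drop i X) = w}"

lemma occ_occset: "occ w X = card (occset w X)"
  by (simp add: occ_def occset_def)

lemma finite_occset[simp]: "finite (occset w X)"
  by (rule finite_subset[of _ "{..length X}"]) (auto simp: occset_def)

lemma window_in:
  "i + p \<le> length Y \<Longrightarrow> take p (drop i (Y @ Z)) = take p (drop i Y)"
  by simp

lemma occ_split:
  assumes "w \<noteq> []" and "occ w (A @ butlast w) = 0"
  shows "occset w (A @ w @ B) = insert (length A) ((\<lambda>j. length A + 1 + j) ` occset w (tl w @ B))"
proof -
  have e0: "occset w (A @ butlast w) = {}" using assms(2) by (simp add: occ_occset)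
  have wdec: "w = butlast w @ [last w]" using assms(1) by simp
  have X: "A @ w @ B = (A @ butlast w) @ [last w] @ B" using wdec
    by (metis append.assoc append_Cons append_Nil)
  have dr: "drop (length A + 1 + j) (A @ w @ B) = drop j (tl w @ B)" for j
    using assms(1) by (cases w) auto
  have memj: "(length A + 1 + j \<in> occset w (A @ w @ B)) = (j \<in> occset w (tl w @ B))" for j
  proof -
    have "(length A + 1 + j + length w \<le> length (A @ w @ B)) = (j + length w \<le> length (tl w @ B))"
      using assms(1) by (cases w) auto
    then show ?thesis unfolding occset_def using dr[of j] by simp
  qed
  show ?thesis
  proof (rule set_eqI, rule iffI)
    fix i assume i: "i \<in> occset w (A @ w @ B)"
    show "i \<in> insert (length A) ((\<lambda>j. length A + 1 + j) ` occset w (tl w @ B))"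
    proof (cases "i < length A")
      case True
      have le: "i + length w \<le> length (A @ butlast w)" using True assms(1) by simp
      have "take (length w) (drop i (A @ w @ B)) = w" using i by (simp add: occset_def)
      then have "take (length w) (drop i (A @ butlast w)) = w"
        using window_in[OF le, of "[last w] @ B"] X by simp
      then have "i \<in> occset w (A @ butlast w)" using le by (simp add: occset_def)
      then show ?thesis using e0 by simp
    next
      case False
      show ?thesis
      proof (cases "i = length A")
        case False
        with \<open>\<not> i < length A\<close> obtain j where j: "i = length A + 1 + j"
          by (metis add.commute add_Suc less_imp_Suc_add linorder_neqE_nat plus_1_eq_Suc)
        have "j \<in> occset w (tl w @ B)" using i j memj by simp
        then show ?thesis using j by blast
      qed simp
    qed
  next
    fix i assume "i \<in> insert (length A) ((\<lambda>j. length A + 1 + j) ` occset w (tl w @ B))"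
    then show "i \<in> occset w (A @ w @ B)"
    proof
      assume "i = length A" then show ?thesis by (simp add: occset_def)
    next
      assume "i \<in> (\<lambda>j. length A + 1 + j) ` occset w (tl w @ B)"
      then obtain j where j: "i = length A + 1 + j" "j \<in> occset w (tl w @ B)" by blast
      then show ?thesis using memj by simp
    qed
  qed
qed

lemma occ_split_card:
  assumes "w \<noteq> []" and "occ w (A @ butlast w) = 0"
  shows "occ w (A @ w @ B) = Suc (occ w (tl w @ B))"
  unfolding occ_occset occ_split[OF assms]
  by (subst card_insert_disjoint) (auto simp: card_image inj_on_def)

lemma occ_split_min:
  assumes "w \<noteq> []" and "occ w (A @ butlast w) = 0" and "i \<in> occset w (A @ w @ B)"
  shows "length A \<le> i"
  using assms(3) unfolding occ_split[OF assms(1,2)] by auto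


definition FA :: "nat \<Rightarrow> nat list \<Rightarrow> nat list \<Rightarrow> nat \<Rightarrow> nat list set" where
  "FA b w s i = {A \<in> bstrings b. length A = i \<and> prefix s (A @ butlast w) \<and> occ w (A @ butlast w) = 0}"

definition GB :: "nat \<Rightarrow> nat list \<Rightarrow> nat \<Rightarrow> nat \<Rightarrow> nat list set" where
  "GB b w k j = {B \<in> bstrings b. length B = j \<and> occ w (tl w @ B) = k}"

lemma finite_len: "finite {A \<in> bstrings b. length A = i}"
  using finite_lists_length_eq[of "{..<b}" i] by (simp add: bstrings_def)

lemma finite_FA: "finite (FA b w s i)"
  by (rule finite_subset[OF _ finite_len[of b i]]) (auto simp: FA_def)

lemma finite_GB: "finite (GB b w k j)"
  by (rule finite_subset[OF _ finite_len[of b j]]) (auto simp: GB_def)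

lemma bstrings_append[simp]: "(xs @ ys \<in> bstrings b) = (xs \<in> bstrings b \<and> ys \<in> bstrings b)"
  by (auto simp: bstrings_def)

lemma bstrings_take: "xs \<in> bstrings b \<Longrightarrow> take n xs \<in> bstrings b"
  by (auto simp: bstrings_def dest: in_set_takeD)

lemma bstrings_drop: "xs \<in> bstrings b \<Longrightarrow> drop n xs \<in> bstrings b"
  by (auto simp: bstrings_def dest: in_set_dropD)

lemma bstrings_butlast: "xs \<in> bstrings b \<Longrightarrow> butlast xs \<in> bstrings b"
  by (auto simp: bstrings_def dest: in_set_butlastD)

lemma bstrings_tl: "xs \<in> bstrings b \<Longrightarrow> tl xs \<in> bstrings b"
  by (cases xs) (auto simp: bstrings_def)

lemma prefix_shorten: "prefix s (Y @ Z) \<Longrightarrow> length s \<le> length Y \<Longrightarrow> prefix s Y"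
proof -
  assume a: "prefix s (Y @ Z)" and l: "length s \<le> length Y"
  obtain r where "Y @ Z = s @ r" using a by (auto simp: prefix_def)
  then have "s = take (length s) (Y @ Z)" by (metis append_eq_conv_conj)
  then have "s = take (length s) Y" using l by simp
  then show "prefix s Y" by (metis append_take_drop_id prefixI)
qed

lemma main_bij:
  assumes w: "w \<noteq> []" "w \<in> bstrings b" and ls: "length s \<le> length w - 1" and k: "k \<ge> 1"
  shows "{X \<in> bstrings b. length X = m + length w \<and> prefix s X \<and> occ w X = k}
    = (\<lambda>(A,B). A @ w @ B) ` (\<Union>i\<in>{0..m}. FA b w s i \<times> GB b w (k-1) (m-i))"
proof (rule set_eqI, rule iffI)
  fix X assume "X \<in> {X \<in> bstrings b. length X = m + length w \<and> prefix s X \<and> occ w X = k}"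
  then have X: "X \<in> bstrings b" "length X = m + length w" "prefix s X" "occ w X = k" by auto
  have ne: "occset w X \<noteq> {}" using X(4) k by (auto simp: occ_occset)
  define i where "i = Min (occset w X)"
  have iin: "i \<in> occset w X" unfolding i_def using ne by simp
  have imin: "\<And>j. j \<in> occset w X \<Longrightarrow> i \<le> j" unfolding i_def by simp
  have i1: "i + length w \<le> length X" and i2: "take (length w) (drop i X) = w"
    using iin by (auto simp: occset_def)
  define A where "A = take i X"
  define B where "B = drop (i + length w) X"
  have XAB: "X = A @ w @ B"
  proof -
    have "X = take i X @ drop i X" by simp
    also have "drop i X = take (length w) (drop i X) @ drop (length w) (drop i X)"
      by (rule append_take_drop_id[symmetric])
    finally show ?thesis using i2 unfolding A_def B_def by (simp add: add.commute)
  qed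
  have lA: "length A = i" using i1 unfolding A_def by simp
  have wdec: "w = butlast w @ [last w]" using w(1) by simp
  have X2: "X = (A @ butlast w) @ [last w] @ B" using XAB wdec
    by (metis append.assoc append_Cons append_Nil)
  have occ0: "occ w (A @ butlast w) = 0"
  proof -
    have "occset w (A @ butlast w) = {}"
    proof (rule ccontr)
      assume "occset w (A @ butlast w) \<noteq> {}"
      then obtain j where j: "j \<in> occset w (A @ butlast w)" by blast
      then have j1: "j + length w \<le> length (A @ butlast w)"
        and j2: "take (length w) (drop j (A @ butlast w)) = w" by (auto simp: occset_def)
      have "take (length w) (drop j X) = take (length w) (drop j (A @ butlast w))"
        unfolding X2 by (rule window_in[OF j1])
      then have "take (length w) (drop j X) = w" using j2 by simp
      moreover have "j + length w \<le> length X" using j1 X2 by simp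
      ultimately have "j \<in> occset w X" by (simp add: occset_def)
      then have "i \<le> j" by (rule imin)
      moreover have "length w \<ge> 1" using w(1) by (cases w) auto
      then have "j < i" using j1 lA by simp
      ultimately show False by simp
    qed
    then show ?thesis by (simp add: occ_occset)
  qed
  have pre: "prefix s (A @ butlast w)"
    by (rule prefix_shorten[of _ _ "[last w] @ B"]) (use X(3) X2 ls lA in auto)
  have occB: "occ w (tl w @ B) = k - 1"
    using occ_split_card[OF w(1) occ0, of B] XAB X(4) by simp
  have im: "i \<le> m" using i1 X(2) by simp
  have lB: "length B = m - i" using X(2) unfolding B_def by simp
  have "A \<in> FA b w s i" using pre occ0 lA bstrings_take[OF X(1)] unfolding FA_def A_def by simp
  moreover have "B \<in> GB b w (k-1) (m-i)" using occB lB bstrings_drop[OF X(1)] unfolding GB_def B_def by simp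
  ultimately show "X \<in> (\<lambda>(A,B). A @ w @ B) ` (\<Union>i\<in>{0..m}. FA b w s i \<times> GB b w (k-1) (m-i))"
    using im XAB by (intro image_eqI[of _ _ "(A,B)"]) auto
next
  fix X assume "X \<in> (\<lambda>(A,B). A @ w @ B) ` (\<Union>i\<in>{0..m}. FA b w s i \<times> GB b w (k-1) (m-i))"
  then obtain i A B where i: "i \<le> m" and A: "A \<in> FA b w s i" and B: "B \<in> GB b w (k-1) (m-i)"
    and XAB: "X = A @ w @ B" by auto
  have wdec: "w = butlast w @ [last w]" using w(1) by simp
  have X2: "X = (A @ butlast w) @ [last w] @ B" using XAB wdec
    by (metis append.assoc append_Cons append_Nil)
  have "prefix (A @ butlast w) X" using X2 by simp
  moreover have "prefix s (A @ butlast w)" using A unfolding FA_def by simp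
  ultimately have "prefix s X" using prefix_order.trans by blast
  moreover have "occ w X = k" using occ_split_card[OF w(1), of A B] A B k XAB
    unfolding FA_def GB_def by simp
  moreover have "X \<in> bstrings b" using A B w XAB unfolding FA_def GB_def by simp
  moreover have "length X = m + length w" using A B i XAB unfolding FA_def GB_def by simp
  ultimately show "X \<in> {X \<in> bstrings b. length X = m + length w \<and> prefix s X \<and> occ w X = k}" by simp
qed

lemma main_inj:
  assumes w: "w \<noteq> []"
  shows "inj_on (\<lambda>(A,B). A @ w @ B) (\<Union>i\<in>{0..m}. FA b w s i \<times> GB b w k (m-i))"
proof (rule inj_onI, clarify)
  fix A B A' B' i i'
  assume A: "A \<in> FA b w s i" and A': "A' \<in> FA b w s i'" and eq: "A @ w @ B = A' @ w @ B'"
  have o: "occ w (A @ butlast w) = 0" "occ w (A' @ butlast w) = 0" using A A' by (auto simp: FA_def)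
  have "length A \<in> occset w (A @ w @ B)" using occ_split[OF w o(1)] by simp
  then have "length A' \<le> length A" using occ_split_min[OF w o(2)] eq by simp
  moreover have "length A' \<in> occset w (A @ w @ B)" using occ_split[OF w o(2)] eq by simp
  then have "length A \<le> length A'" by (rule occ_split_min[OF w o(1)])
  ultimately have "length A = length A'" by simp
  then show "A = A' \<and> B = B'" using eq by simp
qed

lemma main_card:
  assumes w: "w \<noteq> []" "w \<in> bstrings b" and ls: "length s \<le> length w - 1" and k: "k \<ge> 1"
  shows "card {X \<in> bstrings b. length X = m + length w \<and> prefix s X \<and> occ w X = k}
    = (\<Sum>i=0..m. card (FA b w s i) * card (GB b w (k-1) (m-i)))"
proof -
  have "card {X \<in> bstrings b. length X = m + length w \<and> prefix s X \<and> occ w X = k}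
      = card (\<Union>i\<in>{0..m}. FA b w s i \<times> GB b w (k-1) (m-i))"
    unfolding main_bij[OF assms] by (rule card_image[OF main_inj[OF w(1)]])
  also have "\<dots> = (\<Sum>i=0..m. card (FA b w s i \<times> GB b w (k-1) (m-i)))"
    by (rule card_UN_disjoint) (simp_all add: finite_FA finite_GB, auto simp: FA_def)
  also have "\<dots> = (\<Sum>i=0..m. card (FA b w s i) * card (GB b w (k-1) (m-i)))"
    by (simp add: card_cartesian_product)
  finally show ?thesis .
qed


lemma fps_to_fls_Xpow: "fps_to_fls ((fps_X :: int fps) ^ n * F) = fls_X_intpow (int n) * fps_to_fls F"
  by (simp add: fls_times_fps_to_fls fps_to_fls_power fls_X_power_conv_shift_1)

theorem lemma3:
  fixes b p k :: nat and w s :: "nat list"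
  assumes "b \<ge> 2" and "w \<in> bstrings b" and "length w = p" and "p \<ge> 1"
    and "k \<ge> 1" and "s \<in> bstrings b" and "length s = p - 1"
  shows "fps_to_fls (Z2 b w s k)
       = fls_X_intpow (2 - int p) * fps_to_fls (Z3 b w s 0 (butlast w))
           * fps_to_fls (Z2 b w (tl w) (k - 1))"
proof -
  have w0: "w \<noteq> []" using assms(3,4) by auto
  have wb: "butlast w \<in> bstrings b" "tl w \<in> bstrings b"
    using assms(2) by (simp_all add: bstrings_butlast bstrings_tl)
  define F where "F = Abs_fps (\<lambda>i. int (card (FA b w s i)))"
  define G where "G = Abs_fps (\<lambda>j. int (card (GB b w (k-1) j)))"
  have e1: "Z3 b w s 0 (butlast w) = fps_X^(p-1) * F"
  proof (rule fps_ext)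
    fix n
    let ?S = "{X \<in> bstrings b. length X = n \<and> prefix s X \<and> suffix (butlast w) X \<and> occ w X = 0}"
    have c: "Z3 b w s 0 (butlast w) $ n = int (card ?S)" unfolding Z3_def by simp
    show "Z3 b w s 0 (butlast w) $ n = (fps_X^(p-1) * F) $ n"
    proof (cases "n < p - 1")
      case True
      have "?S = {}" using True assms(3) by (auto simp: suffix_def)
      then have "card ?S = 0" by (metis card.empty)
      then show ?thesis using True c unfolding fps_X_power_mult_nth by simp
    next
      case False
      have "?S = (\<lambda>A. A @ butlast w) ` FA b w s (n - (p-1))"
      proof (rule set_eqI, rule iffI)
        fix X assume "X \<in> ?S"
        then obtain A where "X = A @ butlast w" "X \<in> bstrings b" "length X = n" "prefix s X" "occ w X = 0"
          by (auto simp: suffix_def)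
        then show "X \<in> (\<lambda>A. A @ butlast w) ` FA b w s (n - (p-1))"
          using assms(3) by (auto simp: FA_def)
      next
        fix X assume "X \<in> (\<lambda>A. A @ butlast w) ` FA b w s (n - (p-1))"
        then show "X \<in> ?S" using False assms(3) wb by (auto simp: FA_def suffix_def)
      qed
      moreover have "inj_on (\<lambda>A. A @ butlast w) (FA b w s (n - (p-1)))" by (simp add: inj_on_def)
      ultimately show ?thesis using False c unfolding fps_X_power_mult_nth F_def
        by (simp add: card_image)
    qed
  qed
  have e2: "Z2 b w (tl w) (k-1) = fps_X^(p-1) * G"
  proof (rule fps_ext)
    fix n
    let ?S = "{X \<in> bstrings b. length X = n \<and> prefix (tl w) X \<and> suffix [] X \<and> occ w X = k-1}"
    have c: "Z2 b w (tl w) (k-1) $ n = int (card ?S)" unfolding Z2_def Z3_def by simp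
    show "Z2 b w (tl w) (k-1) $ n = (fps_X^(p-1) * G) $ n"
    proof (cases "n < p - 1")
      case True
      have "?S = {}" using True assms(3) by (auto simp: prefix_def)
      then have "card ?S = 0" by (metis card.empty)
      then show ?thesis using True c unfolding fps_X_power_mult_nth by simp
    next
      case False
      have "?S = (\<lambda>B. tl w @ B) ` GB b w (k-1) (n - (p-1))"
      proof (rule set_eqI, rule iffI)
        fix X assume "X \<in> ?S"
        then obtain B where "X = tl w @ B" "X \<in> bstrings b" "length X = n" "occ w X = k-1"
          by (auto simp: prefix_def)
        then show "X \<in> (\<lambda>B. tl w @ B) ` GB b w (k-1) (n - (p-1))"
          using assms(3) by (auto simp: GB_def)
      next
        fix X assume "X \<in> (\<lambda>B. tl w @ B) ` GB b w (k-1) (n - (p-1))"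
        then show "X \<in> ?S" using False assms(3) wb by (auto simp: GB_def)
      qed
      moreover have "inj_on (\<lambda>B. tl w @ B) (GB b w (k-1) (n - (p-1)))" by (simp add: inj_on_def)
      ultimately show ?thesis using False c unfolding fps_X_power_mult_nth G_def
        by (simp add: card_image)
    qed
  qed
  have e3: "Z2 b w s k = fps_X^p * (F * G)"
  proof (rule fps_ext)
    fix n
    let ?S = "{X \<in> bstrings b. length X = n \<and> prefix s X \<and> suffix [] X \<and> occ w X = k}"
    have c: "Z2 b w s k $ n = int (card ?S)" unfolding Z2_def Z3_def by simp
    show "Z2 b w s k $ n = (fps_X^p * (F * G)) $ n"
    proof (cases "n < p")
      case True
      have "?S = {}"
      proof (rule ccontr)
        assume "?S \<noteq> {}"
        then obtain X where X: "length X = n" "occ w X = k" by auto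
        then have "occset w X \<noteq> {}" using assms(5) by (auto simp: occ_occset)
        then obtain i where "i \<in> occset w X" by blast
        then have "i + p \<le> n" using X assms(3) by (auto simp: occset_def)
        then show False using True by simp
      qed
      then have "card ?S = 0" by (metis card.empty)
      then show ?thesis using True c unfolding fps_X_power_mult_nth by simp
    next
      case False
      define m where "m = n - p"
      have "?S = {X \<in> bstrings b. length X = m + length w \<and> prefix s X \<and> occ w X = k}"
        using False assms(3) unfolding m_def by auto
      then have "card ?S = (\<Sum>i=0..m. card (FA b w s i) * card (GB b w (k-1) (m-i)))"
        using main_card[OF w0 assms(2) _ assms(5), of s m] assms(3,7) by simp
      moreover have "(F*G) $ m = (\<Sum>i=0..m. F$i * G$(m-i))" by (rule fps_mult_nth)
      ultimately show ?thesis using False c unfolding fps_X_power_mult_nth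
        by (simp add: F_def G_def m_def)
    qed
  qed
  have xp: "(fls_X_intpow (int p) :: int fls) = (fls_X_intpow (2 - int p) * fls_X_intpow (int (p-1))) * fls_X_intpow (int (p-1))"
    unfolding fls_X_intpow_times_fls_X_intpow using assms(4) by simp
  show ?thesis
    unfolding e1 e2 e3 fps_to_fls_Xpow
    unfolding xp fls_times_fps_to_fls
    by (simp add: algebra_simps)
qed

end
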